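(* Let $X$ be a Hausdorff topological space and $\Phi$ a local semiflow on $X$. Let $M\subset X$ be a closed strongly admissible set, and let $\gamma_n$ be a sequence of solutions contained in $M$, each $\gamma_n$ defined on $[-t_n,t_n]$, with $t_n\to\infty$. Then there exist a subsequence $\gamma_{n_k}$ and a full solution $\gamma$ contained in $M$ such that for every compact interval $J\subset\mathbb R$ and every neighborhood $\mathcal V$ of $\mathcal T_\gamma(J)$ in $J\times X$, there exists $k_0$ with $\mathcal T_{\gamma_{n_k}}(J)\subset\mathcal V$ for all $k>k_0$.
   Context: A local semiflow $\Phi$ on $X$ is a continuous map from an open subset $\mathcal D_\Phi\subset\mathbb R^+\times X$ to $X$ such that: (i) for each $x\in X$ there is $T_x\in(0,\infty]$ with $(t,x)\in\mathcal D_\Phi$ iff $t\in[0,T_x)$; (ii) $\Phi(0,x)=x$; (iii) if $(t+s,x)\in\mathcal D_\Phi$ with $t,s\ge0$, then $\Phi(t+s,x)=\Phi(t,\Phi(s,x))$. Write $\Phi(t)x=\Phi(t,x)$, and for $M\subset X$, $J\subset\mathbb R^+$, $\Phi(J)M=\{\Phi(t)x: x\in M,\ t\in J\cap[0,T_x)\}$. A solution on an interval $I\subset\mathbb R$ is a map $\gamma:I\to X$ with $\gamma(t)=\Phi(t-s)\gamma(s)$ for all $s\le t$ in $I$; a full solution is a solution on $\mathbb R$. Its trace on $I$ is $\mathcal T_\gamma(I)=\{(t,\gamma(t)):t\in I\}$. $\Phi$ does not explode in $M$ if $T_x=\infty$ whenever $\Phi([0,T_x))x\subset M$. $M$ is admissible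 if for any sequences $x_n\in M$ and $t_n\to\infty$ with $\Phi([0,t_n])x_n\subset M$ for all $n$, the sequence $\Phi(t_n)x_n$ has a convergent subsequence (in $X$); $M$ is strongly admissible if it is admissible and $\Phi$ does not explode in $M$. Convention: $U$ is a neighborhood of $A$ if $\overline A\subset\mathrm{int}\,U$; $J\times X$ has the product topology. *)

theory Defs
  imports "HOL-Analysis.Analysis"
begin

definition local_semiflow :: "(real \<times> 'a::topological_space) set \<Rightarrow> (real \<Rightarrow> 'a \<Rightarrow> 'a) \<Rightarrow> bool" where
  "local_semiflow D Phi \<longleftrightarrow>
     openin (top_of_set ({0..} \<times> UNIV)) D \<and>
     continuous_on D (\<lambda>(t, x). Phi t x) \<and>
     (\<forall>x. \<exists>T::ereal. T > 0 \<and> (\<forall>t. (t, x) \<in> D \<longleftrightarrow> 0 \<le> t \<and> ereal t < T)) \<and>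
     (\<forall>x. Phi 0 x = x) \<and>
     (\<forall>x t s. 0 \<le> t \<longrightarrow> 0 \<le> s \<longrightarrow> (t + s, x) \<in> D \<longrightarrow> Phi (t + s) x = Phi t (Phi s x))"

definition flow_image :: "(real \<times> 'a) set \<Rightarrow> (real \<Rightarrow> 'a \<Rightarrow> 'a) \<Rightarrow> real set \<Rightarrow> 'a set \<Rightarrow> 'a set" where
  "flow_image D Phi J M = {Phi t x | t x. x \<in> M \<and> t \<in> J \<and> (t, x) \<in> D}"

text \<open>Phi does not explode in M: T x = \<infinity> whenever Phi([0,T x))x \<subseteq> M.
  Since [0,T x) = {t. (t,x) \<in> D}, this says: if the whole forward orbit stays in M,
  then the orbit is defined for all times.\<close>
definition no_explosion :: "(real \<times> 'a) set \<Rightarrow> (real \<Rightarrow> 'a \<Rightarrow> 'a) \<Rightarrow> 'a set \<Rightarrow> bool" where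
  "no_explosion D Phi M \<longleftrightarrow>
     (\<forall>x. flow_image D Phi {0..} {x} \<subseteq> M \<longrightarrow> (\<forall>t\<ge>0. (t, x) \<in> D))"

definition admissible :: "(real \<times> 'a::topological_space) set \<Rightarrow> (real \<Rightarrow> 'a \<Rightarrow> 'a) \<Rightarrow> 'a set \<Rightarrow> bool" where
  "admissible D Phi M \<longleftrightarrow>
     (\<forall>(xs::nat \<Rightarrow> 'a) (ts::nat \<Rightarrow> real).
        (\<forall>n. xs n \<in> M) \<longrightarrow> filterlim ts at_top sequentially \<longrightarrow>
        (\<forall>n. flow_image D Phi {0..ts n} {xs n} \<subseteq> M) \<longrightarrow>
        (\<forall>n. (ts n, xs n) \<in> D) \<longrightarrow>
        (\<exists>r y. strict_mono r \<and> ((\<lambda>k. Phi (ts (r k)) (xs (r k))) \<longlongrightarrow> y) sequentially))"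

definition strongly_admissible :: "(real \<times> 'a::topological_space) set \<Rightarrow> (real \<Rightarrow> 'a \<Rightarrow> 'a) \<Rightarrow> 'a set \<Rightarrow> bool" where
  "strongly_admissible D Phi M \<longleftrightarrow> admissible D Phi M \<and> no_explosion D Phi M"

definition is_solution :: "(real \<times> 'a) set \<Rightarrow> (real \<Rightarrow> 'a \<Rightarrow> 'a) \<Rightarrow> real set \<Rightarrow> (real \<Rightarrow> 'a) \<Rightarrow> bool" where
  "is_solution D Phi I \<gamma> \<longleftrightarrow>
     (\<forall>s\<in>I. \<forall>t\<in>I. s \<le> t \<longrightarrow> (t - s, \<gamma> s) \<in> D \<and> \<gamma> t = Phi (t - s) (\<gamma> s))"

definition sol_trace :: "(real \<Rightarrow> 'a) \<Rightarrow> real set \<Rightarrow> (real \<times> 'a) set" where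
  "sol_trace \<gamma> I = {(t, \<gamma> t) | t. t \<in> I}"

definition nbhd_in :: "(real \<times> 'a::topological_space) set \<Rightarrow> real set \<Rightarrow> (real \<times> 'a) set \<Rightarrow> bool" where
  "nbhd_in U J A \<longleftrightarrow>
     (top_of_set (J \<times> UNIV)) closure_of A \<subseteq> (top_of_set (J \<times> UNIV)) interior_of U"

end

theory Submission
  imports Defs "HOL-Library.Diagonal_Subsequence"
begin

locale p28ctx =
  fixes D :: "(real \<times> 'a::t2_space) set"
    and Phi :: "real \<Rightarrow> 'a \<Rightarrow> 'a"
    and M :: "'a set"
    and \<gamma>s :: "nat \<Rightarrow> real \<Rightarrow> 'a"
    and ts :: "nat \<Rightarrow> real"
  assumes lsf: "local_semiflow D Phi"
    and clM: "closed M"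
    and sadm: "strongly_admissible D Phi M"
    and sol: "\<And>n. is_solution D Phi {-ts n..ts n} (\<gamma>s n)"
    and inM: "\<And>n. \<gamma>s n ` {-ts n..ts n} \<subseteq> M"
    and tsl: "filterlim ts at_top sequentially"
begin

lemma D_nonneg:
  assumes "(t, x) \<in> D" shows "0 \<le> t"
proof -
  have "\<forall>x. \<exists>T::ereal. T > 0 \<and> (\<forall>t. (t, x) \<in> D \<longleftrightarrow> 0 \<le> t \<and> ereal t < T)"
    using lsf unfolding local_semiflow_def by (elim conjE)
  then obtain T :: ereal where "\<forall>t. (t, x) \<in> D \<longleftrightarrow> 0 \<le> t \<and> ereal t < T" by blast
  then show ?thesis using assms by blast
qed

lemma solE:
  assumes "-ts n \<le> s" "s \<le> t" "t \<le> ts n"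
  shows "(t - s, \<gamma>s n s) \<in> D" "\<gamma>s n t = Phi (t - s) (\<gamma>s n s)" "\<gamma>s n t \<in> M"
proof -
  have s1: "s \<in> {-ts n..ts n}" and t1: "t \<in> {-ts n..ts n}" using assms by auto
  have "(t - s, \<gamma>s n s) \<in> D \<and> \<gamma>s n t = Phi (t - s) (\<gamma>s n s)"
    using sol[of n, unfolded is_solution_def, rule_format, OF s1 t1 assms(2)] .
  then show "(t - s, \<gamma>s n s) \<in> D" "\<gamma>s n t = Phi (t - s) (\<gamma>s n s)" by simp_all
  show "\<gamma>s n t \<in> M" using inM[of n] t1 by (rule subsetD[OF _ imageI])
qed

lemma contD:
  assumes p: "(p \<longlongrightarrow> q) F" and q: "q \<in> D" and ev: "eventually (\<lambda>j. fst (p j) \<ge> 0) F"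
  shows "eventually (\<lambda>j. p j \<in> D) F"
    and "((\<lambda>j. Phi (fst (p j)) (snd (p j))) \<longlongrightarrow> Phi (fst q) (snd q)) F"
proof -
  obtain T where T: "open T" "D = ({0..} \<times> UNIV) \<inter> T"
    using lsf unfolding local_semiflow_def openin_open by blast
  have "eventually (\<lambda>j. p j \<in> T) F"
    using topological_tendstoD[OF p] T q by blast
  then show evD: "eventually (\<lambda>j. p j \<in> D) F"
    using ev by eventually_elim (auto simp: T mem_Times_iff)
  have c: "continuous_on D (\<lambda>(t, x). Phi t x)"
    using lsf unfolding local_semiflow_def by blast
  have "((\<lambda>j. (\<lambda>(t, x). Phi t x) (p j)) \<longlongrightarrow> (\<lambda>(t, x). Phi t x) q) F"
    by (rule continuous_on_tendsto_compose[OF c p q evD])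
  then show "((\<lambda>j. Phi (fst (p j)) (snd (p j))) \<longlongrightarrow> Phi (fst q) (snd q)) F"
    by (simp add: o_def case_prod_beta)
qed

lemma keyH:
  assumes g: "filterlim (\<lambda>k. ts (g k)) at_top sequentially"
    and c: "(\<lambda>k. \<gamma>s (g k) s) \<longlonglongrightarrow> x"
  shows "x \<in> M" and "\<And>\<tau>. 0 \<le> \<tau> \<Longrightarrow> (\<tau>, x) \<in> D"
    and "\<And>\<tau>. 0 \<le> \<tau> \<Longrightarrow> (\<lambda>k. \<gamma>s (g k) (s + \<tau>)) \<longlonglongrightarrow> Phi \<tau> x"
proof -
  have big: "\<And>B. eventually (\<lambda>k. B \<le> ts (g k)) sequentially"
    using g unfolding filterlim_at_top by blast
  have evM: "eventually (\<lambda>k. \<gamma>s (g k) s \<in> M) sequentially"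
    using big[of "\<bar>s\<bar>"] by eventually_elim (auto intro!: solE(3))
  show xM: "x \<in> M"
    by (rule Lim_in_closed_set[OF clM evM _ c]) simp
  have conv: "(\<lambda>k. \<gamma>s (g k) (s + \<tau>)) \<longlonglongrightarrow> Phi \<tau> x" if "(\<tau>, x) \<in> D" for \<tau>
  proof -
    have t0: "0 \<le> \<tau>" using D_nonneg that .
    have p: "((\<lambda>k. (\<tau>, \<gamma>s (g k) s)) \<longlongrightarrow> (\<tau>, x)) sequentially"
      by (intro tendsto_intros c)
    have l: "(\<lambda>k. Phi \<tau> (\<gamma>s (g k) s)) \<longlonglongrightarrow> Phi \<tau> x"
      using contD(2)[OF p that] t0 by simp
    have "eventually (\<lambda>k. Phi \<tau> (\<gamma>s (g k) s) = \<gamma>s (g k) (s + \<tau>)) sequentially"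
      using big[of "\<bar>s\<bar> + \<tau>"] by eventually_elim (use t0 in \<open>auto intro!: solE(2)[symmetric, where s=s and t="s+\<tau>", simplified]\<close>)
    then show ?thesis by (rule Lim_transform_eventually[OF l])
  qed
  have orb: "flow_image D Phi {0..} {x} \<subseteq> M"
  proof
    fix z assume "z \<in> flow_image D Phi {0..} {x}"
    then obtain \<tau> where z: "z = Phi \<tau> x" "(\<tau>, x) \<in> D"
      unfolding flow_image_def by auto
    have t0: "0 \<le> \<tau>" using D_nonneg z(2) .
    have "eventually (\<lambda>k. \<gamma>s (g k) (s + \<tau>) \<in> M) sequentially"
      using big[of "\<bar>s\<bar> + \<tau>"] by eventually_elim (use t0 in \<open>auto intro!: solE(3)\<close>)
    then show "z \<in> M" using Lim_in_closed_set[OF clM _ _ conv[OF z(2)]] z by simp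
  qed
  have ne: "no_explosion D Phi M" using sadm by (simp add: strongly_admissible_def)
  have allD: "\<forall>t\<ge>0. (t, x) \<in> D"
    using ne[unfolded no_explosion_def, rule_format, OF orb] by blast
  show D: "(\<tau>, x) \<in> D" if "0 \<le> \<tau>" for \<tau>
    using allD that by blast
  show "(\<lambda>k. \<gamma>s (g k) (s + \<tau>)) \<longlonglongrightarrow> Phi \<tau> x" if "0 \<le> \<tau>" for \<tau>
    by (rule conv[OF D[OF that]])
qed

lemma ex_conv_sub:
  assumes s: "strict_mono (s::nat\<Rightarrow>nat)"
  shows "\<exists>r'. strict_mono r' \<and> (\<exists>y. (\<lambda>k. \<gamma>s ((s \<circ> r') k) (-real n)) \<longlonglongrightarrow> y)"
proof -
  have fs: "filterlim (\<lambda>j. ts (s j)) at_top sequentially"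
    using filterlim_compose[OF tsl filterlim_subseq[OF s]] .
  have fsZ: "\<And>Z. \<exists>N. \<forall>j\<ge>N. Z \<le> ts (s j)"
    using fs unfolding filterlim_at_top eventually_sequentially by blast
  obtain N where N: "\<And>j. j \<ge> N \<Longrightarrow> real n \<le> ts (s j)" using fsZ by blast
  define xs where "xs j = \<gamma>s (s (j+N)) (- ts (s (j+N)))" for j
  define T where "T j = ts (s (j+N)) - real n" for j
  have adm: "admissible D Phi M" using sadm unfolding strongly_admissible_def by blast
  have tsN: "real n \<le> ts (s (j+N))" for j using N by simp
  have 1: "\<forall>j. xs j \<in> M"
  proof
    fix j show "xs j \<in> M" unfolding xs_def using tsN[of j] by (intro solE(3)) auto
  qed
  have 2: "filterlim T at_top sequentially"
    unfolding filterlim_at_top eventually_sequentially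
  proof
    fix Z
    obtain N2 where h: "\<forall>j\<ge>N2. Z + real n \<le> ts (s j)" using fsZ by blast
    show "\<exists>N. \<forall>j\<ge>N. Z \<le> T j" unfolding T_def
    proof (intro exI[of _ N2] allI impI)
      fix j assume "N2 \<le> j"
      then have "Z + real n \<le> ts (s (j+N))" using h by simp
      then show "Z \<le> ts (s (j+N)) - real n" by simp
    qed
  qed
  have 3: "\<forall>j. flow_image D Phi {0..T j} {xs j} \<subseteq> M"
  proof (intro allI subsetI)
    fix j z assume "z \<in> flow_image D Phi {0..T j} {xs j}"
    then obtain \<tau> where z: "z = Phi \<tau> (xs j)" "0 \<le> \<tau>" "\<tau> \<le> T j"
      unfolding flow_image_def by auto
    have "\<gamma>s (s (j+N)) (- ts (s (j+N)) + \<tau>) = Phi (- ts (s (j+N)) + \<tau> - - ts (s (j+N))) (\<gamma>s (s (j+N)) (- ts (s (j+N))))"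
      using z tsN[of j] unfolding T_def by (intro solE(2)) auto
    moreover have "\<gamma>s (s (j+N)) (- ts (s (j+N)) + \<tau>) \<in> M"
      using z tsN[of j] unfolding T_def by (intro solE(3)) auto
    ultimately show "z \<in> M" using z unfolding xs_def by simp
  qed
  have 4: "\<forall>j. (T j, xs j) \<in> D"
  proof
    fix j
    have "(- real n - - ts (s (j+N)), \<gamma>s (s (j+N)) (- ts (s (j+N)))) \<in> D"
      using tsN[of j] by (intro solE(1)) auto
    then show "(T j, xs j) \<in> D" unfolding T_def xs_def by simp
  qed
  have ex: "\<exists>r y. strict_mono r \<and> (\<lambda>k. Phi (T (r k)) (xs (r k))) \<longlonglongrightarrow> y"
    by (rule adm[unfolded admissible_def, rule_format, OF 1[rule_format] 2 3[rule_format] 4[rule_format]])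
  then obtain r y where r: "strict_mono r" and y: "(\<lambda>k. Phi (T (r k)) (xs (r k))) \<longlonglongrightarrow> y"
    by (elim exE conjE)
  have e: "Phi (T j) (xs j) = \<gamma>s (s (j+N)) (- real n)" for j
  proof -
    have "\<gamma>s (s (j+N)) (- real n) = Phi (- real n - - ts (s (j+N))) (\<gamma>s (s (j+N)) (- ts (s (j+N))))"
      using tsN[of j] by (intro solE(2)) auto
    then show ?thesis unfolding T_def xs_def by simp
  qed
  show ?thesis
  proof (intro exI conjI)
    show "strict_mono (\<lambda>k. r k + N)" using r unfolding strict_mono_def by simp
    show "(\<lambda>k. \<gamma>s ((s \<circ> (\<lambda>k. r k + N)) k) (-real n)) \<longlonglongrightarrow> y"
      using y by (simp add: e)
  qed
qed

end

theorem proposition2p8: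
  fixes D :: "(real \<times> 'a::t2_space) set"
    and Phi :: "real \<Rightarrow> 'a \<Rightarrow> 'a"
    and M :: "'a set"
    and \<gamma>s :: "nat \<Rightarrow> real \<Rightarrow> 'a"
    and ts :: "nat \<Rightarrow> real"
  assumes "local_semiflow D Phi"
    and "closed M"
    and "strongly_admissible D Phi M"
    and "\<And>n. is_solution D Phi {-ts n..ts n} (\<gamma>s n)"
    and "\<And>n. \<gamma>s n ` {-ts n..ts n} \<subseteq> M"
    and "filterlim ts at_top sequentially"
  shows "\<exists>(r::nat \<Rightarrow> nat) \<gamma>. strict_mono r \<and> is_solution D Phi UNIV \<gamma> \<and> range \<gamma> \<subseteq> M \<and>
           (\<forall>a b V. a \<le> b \<longrightarrow> nbhd_in V {a..b} (sol_trace \<gamma> {a..b}) \<longrightarrow>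
              (\<exists>k0. \<forall>k>k0. sol_trace (\<gamma>s (r k)) {a..b} \<subseteq> V))"
proof -
  interpret C: p28ctx D Phi M \<gamma>s ts
    using assms by unfold_locales auto
  interpret S: subseqs "\<lambda>n s. \<exists>y. (\<lambda>k. \<gamma>s (s k) (-real n)) \<longlonglongrightarrow> y"
    by unfold_locales (rule C.ex_conv_sub)
  define d where "d = S.diagseq"
  have dm: "strict_mono d" unfolding d_def by (rule S.subseq_diagseq)
  have conv0: "\<exists>y. (\<lambda>k. \<gamma>s (d k) (-real n)) \<longlonglongrightarrow> y" for n
  proof -
    have "\<exists>y. (\<lambda>k. \<gamma>s ((S.diagseq \<circ> (+) (Suc n)) k) (-real n)) \<longlonglongrightarrow> y"
    proof (rule S.diagseq_holds)
      fix r s n assume "strict_mono (r::nat\<Rightarrow>nat)" "\<exists>y. (\<lambda>k. \<gamma>s (s k) (-real n)) \<longlonglongrightarrow> y"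
      then show "\<exists>y. (\<lambda>k. \<gamma>s ((s \<circ> r) k) (-real n)) \<longlonglongrightarrow> y"
        using LIMSEQ_subseq_LIMSEQ[of "\<lambda>k. \<gamma>s (s k) (-real n)" _ r] by (auto simp: o_def)
    qed
    then obtain y where "(\<lambda>k. \<gamma>s (d (k + Suc n)) (-real n)) \<longlonglongrightarrow> y"
      by (auto simp: d_def o_def add.commute)
    then show ?thesis using LIMSEQ_offset[of "\<lambda>k. \<gamma>s (d k) (-real n)" "Suc n"] by blast
  qed
  have fd: "filterlim (\<lambda>k. ts (d k)) at_top sequentially"
    using filterlim_compose[OF assms(6) filterlim_subseq[OF dm]] .
  define \<gamma> where "\<gamma> t = lim (\<lambda>k. \<gamma>s (d k) t)" for t
  have L: "(\<lambda>k. \<gamma>s (d k) t) \<longlonglongrightarrow> \<gamma> t" for t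
  proof -
    define n where "n = nat \<lceil>\<bar>t\<bar>\<rceil>"
    have tn: "0 \<le> t + real n" unfolding n_def by linarith
    obtain y where y: "(\<lambda>k. \<gamma>s (d k) (-real n)) \<longlonglongrightarrow> y" using conv0 by blast
    have "(\<lambda>k. \<gamma>s (d k) (-real n + (t + real n))) \<longlonglongrightarrow> Phi (t + real n) y"
      by (rule C.keyH(3)[OF fd y tn])
    then have "(\<lambda>k. \<gamma>s (d k) t) \<longlonglongrightarrow> Phi (t + real n) y" by simp
    then show ?thesis unfolding \<gamma>_def using limI by (metis)
  qed
  have gM: "range \<gamma> \<subseteq> M" using C.keyH(1)[OF fd L] by blast
  have gsol: "(t - s, \<gamma> s) \<in> D \<and> \<gamma> t = Phi (t - s) (\<gamma> s)" if "s \<le> t" for s t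
  proof -
    have ts0: "0 \<le> t - s" using that by simp
    have "(\<lambda>k. \<gamma>s (d k) (s + (t - s))) \<longlonglongrightarrow> Phi (t - s) (\<gamma> s)"
      by (rule C.keyH(3)[OF fd L[of s] ts0])
    then have "(\<lambda>k. \<gamma>s (d k) t) \<longlonglongrightarrow> Phi (t - s) (\<gamma> s)" by simp
    then have "\<gamma> t = Phi (t - s) (\<gamma> s)" by (rule LIMSEQ_unique[OF L[of t]])
    moreover have "(t - s, \<gamma> s) \<in> D" by (rule C.keyH(2)[OF fd L[of s] ts0])
    ultimately show ?thesis by simp
  qed
  have issol: "is_solution D Phi UNIV \<gamma>" unfolding is_solution_def using gsol by blast
  have main: "\<exists>k0. \<forall>k>k0. sol_trace (\<gamma>s (d k)) {a..b} \<subseteq> V"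
    if ab: "a \<le> b" and nb: "nbhd_in V {a..b} (sol_trace \<gamma> {a..b})" for a b V
  proof (rule ccontr)
    assume neg: "\<not> (\<exists>k0. \<forall>k>k0. sol_trace (\<gamma>s (d k)) {a..b} \<subseteq> V)"
    define Q where "Q k \<longleftrightarrow> (\<exists>t. t \<in> {a..b} \<and> (t, \<gamma>s (d k) t) \<notin> V)" for k
    have inf: "\<forall>m. \<exists>k>m. Q k"
    proof
      fix m
      have "\<not> (\<forall>k>m. sol_trace (\<gamma>s (d k)) {a..b} \<subseteq> V)" using neg by blast
      then show "\<exists>k>m. Q k" unfolding Q_def sol_trace_def by blast
    qed
    have "infinite {k. Q k}"
      unfolding infinite_nat_iff_unbounded using inf by simp
    then obtain q :: "nat \<Rightarrow> nat" where q: "strict_mono q" "\<forall>j. q j \<in> {k. Q k}"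
      using infinite_enumerate by blast
    then have "\<forall>j. \<exists>t. t \<in> {a..b} \<and> (t, \<gamma>s (d (q j)) t) \<notin> V" unfolding Q_def by blast
    then have "\<exists>\<tau>. \<forall>j. \<tau> j \<in> {a..b} \<and> (\<tau> j, \<gamma>s (d (q j)) (\<tau> j)) \<notin> V" by (rule choice)
    then obtain \<tau> where \<tau>: "\<forall>j. \<tau> j \<in> {a..b} \<and> (\<tau> j, \<gamma>s (d (q j)) (\<tau> j)) \<notin> V" by blast
    have \<tau>ab: "\<forall>j. \<tau> j \<in> {a..b}" using \<tau> by blast
    obtain tt r2 where tt: "tt \<in> {a..b}" and r2: "strict_mono (r2::nat\<Rightarrow>nat)" and ttl: "(\<tau> \<circ> r2) \<longlonglongrightarrow> tt"
      using seq_compactE[OF compact_imp_seq_compact[OF compact_Icc] \<tau>ab] by blast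
    define g where "g = d \<circ> (q \<circ> r2)"
    have qr: "strict_mono (q \<circ> r2)" using q(1) r2 by (rule strict_mono_o)
    have gm: "strict_mono g" unfolding g_def using dm qr by (rule strict_mono_o)
    have fg: "filterlim (\<lambda>k. ts (g k)) at_top sequentially"
      using filterlim_compose[OF assms(6) filterlim_subseq[OF gm]] .
    define n where "n = nat \<lceil>\<bar>a\<bar>\<rceil>"
    define s0 where "s0 = - real n"
    have s0a: "s0 \<le> a" unfolding s0_def n_def by linarith
    have Lg: "(\<lambda>j. \<gamma>s (g j) s0) \<longlonglongrightarrow> \<gamma> s0"
      using LIMSEQ_subseq_LIMSEQ[OF L[of s0] qr] unfolding g_def by (simp add: o_def)
    have stt: "s0 \<le> tt" using s0a tt by simp
    have Dtt: "(tt - s0, \<gamma> s0) \<in> D" and gtt: "\<gamma> tt = Phi (tt - s0) (\<gamma> s0)"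
      using gsol[OF stt] by simp_all
    have tl: "(\<lambda>j. \<tau> (r2 j)) \<longlonglongrightarrow> tt" using ttl by (simp add: o_def)
    have p: "((\<lambda>j. (\<tau> (r2 j) - s0, \<gamma>s (g j) s0)) \<longlongrightarrow> (tt - s0, \<gamma> s0)) sequentially"
      by (intro tendsto_Pair tendsto_diff tl tendsto_const Lg)
    have ev0: "eventually (\<lambda>j. fst (\<tau> (r2 j) - s0, \<gamma>s (g j) s0) \<ge> 0) sequentially"
      using \<tau>ab s0a by (auto intro!: always_eventually order_trans[OF s0a])
    have c1: "(\<lambda>j. Phi (\<tau> (r2 j) - s0) (\<gamma>s (g j) s0)) \<longlonglongrightarrow> \<gamma> tt"
      using C.contD(2)[OF p Dtt ev0] gtt by simp
    have big: "eventually (\<lambda>j. real n + \<bar>b\<bar> \<le> ts (g j)) sequentially"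
      using fg unfolding filterlim_at_top by blast
    have "eventually (\<lambda>j. Phi (\<tau> (r2 j) - s0) (\<gamma>s (g j) s0) = \<gamma>s (g j) (\<tau> (r2 j))) sequentially"
      using big
    proof eventually_elim
      case (elim j)
      have a1: "- ts (g j) \<le> s0" using elim unfolding s0_def by simp
      have a2: "s0 \<le> \<tau> (r2 j)" using s0a \<tau>ab[rule_format, of "r2 j"] by simp
      have h1: "\<tau> (r2 j) \<le> b" using \<tau>ab[rule_format, of "r2 j"] by simp
      have h2: "0 \<le> real n" by simp
      have a3: "\<tau> (r2 j) \<le> ts (g j)" using elim h1 h2 abs_ge_self[of b] by linarith
      show ?case using C.solE(2)[OF a1 a2 a3] by (rule sym)
    qed
    then have w: "(\<lambda>j. \<gamma>s (g j) (\<tau> (r2 j))) \<longlonglongrightarrow> \<gamma> tt"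
      by (rule Lim_transform_eventually[OF c1])
    have wp: "((\<lambda>j. (\<tau> (r2 j), \<gamma>s (g j) (\<tau> (r2 j)))) \<longlongrightarrow> (tt, \<gamma> tt)) sequentially"
      by (intro tendsto_Pair tl w)
    let ?X = "top_of_set ({a..b} \<times> (UNIV::'a set))"
    have trsub: "sol_trace \<gamma> {a..b} \<subseteq> topspace ?X"
      unfolding sol_trace_def by auto
    have "(tt, \<gamma> tt) \<in> sol_trace \<gamma> {a..b}" unfolding sol_trace_def using tt by blast
    then have mem: "(tt, \<gamma> tt) \<in> ?X interior_of V"
      using closure_of_subset[OF trsub] nb unfolding nbhd_in_def by blast
    have "openin ?X (?X interior_of V)" by (rule openin_interior_of)
    then obtain T where T: "open T" "?X interior_of V = ({a..b} \<times> UNIV) \<inter> T"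
      unfolding openin_open by blast
    have ttT: "(tt, \<gamma> tt) \<in> T" using mem unfolding T(2) by simp
    have "eventually (\<lambda>j. (\<tau> (r2 j), \<gamma>s (g j) (\<tau> (r2 j))) \<in> T) sequentially"
      by (rule topological_tendstoD[OF wp T(1) ttT])
    then have "eventually (\<lambda>j. False) sequentially"
    proof eventually_elim
      case (elim j)
      have "(\<tau> (r2 j), \<gamma>s (g j) (\<tau> (r2 j))) \<in> ({a..b} \<times> UNIV) \<inter> T"
        using elim \<tau>ab[rule_format, of "r2 j"] by simp
      then have "(\<tau> (r2 j), \<gamma>s (g j) (\<tau> (r2 j))) \<in> ?X interior_of V"
        unfolding T(2) .
      then have i1: "(\<tau> (r2 j), \<gamma>s (g j) (\<tau> (r2 j))) \<in> V" by (rule subsetD[OF interior_of_subset])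
      have gj: "g j = d (q (r2 j))" unfolding g_def by simp
      have "(\<tau> (r2 j), \<gamma>s (d (q (r2 j))) (\<tau> (r2 j))) \<notin> V"
        using \<tau>[rule_format, of "r2 j"] by blast
      then show False using i1 unfolding gj by contradiction
    qed
    then show False by simp
  qed
  show ?thesis
    apply (intro exI[of _ d] exI[of _ \<gamma>] conjI allI impI dm issol gM)
    by (rule main)
qed

end
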